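(* Let $m\ge7$ with $m\equiv3\pmod4$, let $N=3^m-1$ and $v=\frac{3^m-1}{2}+3^{(m-1)/2}-1$. Then $\gcd(v,N)=1$, and for every integer $i$ with $0\le i\le\frac{3^{(m-1)/2}+1}{4}$, the $3$-weight of $v(1+2i)\bmod N$ is congruent to $3$ modulo $4$ (i.e. the $3$-adic digit vector of $v(1+2i)\bmod N$ lies in $S_3(m)$).
   Context: For an integer $i$, $i\bmod N$ is the unique $s\in\{0,\dots,N-1\}$ with $N\mid i-s$. For $0\le s\le 3^m-1$ with $3$-adic expansion $s=\sum_{j=0}^{m-1}s_j3^j$, $s_j\in\{0,1,2\}$, the $3$-weight is $\mathrm{wt}_3(s)=\sum_j s_j$. $S_j(m)=\{(i_0,\dots,i_{m-1})\in\{0,1,2\}^m:\sum i_k\equiv j\pmod 4\}$. *)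

theory Defs
  imports Main
begin

definition wt3 :: "nat \<Rightarrow> nat \<Rightarrow> nat" where
  "wt3 m s = (\<Sum>j<m. (s div 3 ^ j) mod 3)"

end

theory Submission
  imports Defs
begin

lemma wt3_Suc: "wt3 (Suc k) s = s mod 3 + wt3 k (s div 3)"
  unfolding wt3_def
  by (simp add: sum.lessThan_Suc_shift div_mult2_eq del: sum.lessThan_Suc)

lemma wt3_0[simp]: "wt3 0 s = 0" by (simp add: wt3_def)

lemma wt3_zero[simp]: "wt3 k 0 = 0" by (simp add: wt3_def)

lemma wt3_one: "wt3 1 z = z mod 3" by (simp add: wt3_def)

lemma wt3_split: "y < 3^k \<Longrightarrow> wt3 (k + n) (y + 3^k * z) = wt3 k y + wt3 n z"
proof (induction k arbitrary: y)
  case 0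
  then show ?case by simp
next
  case (Suc k)
  have m: "(y + 3 ^ Suc k * z) mod 3 = y mod 3"
    by (metis mod_mult_self2 mult.assoc power_Suc)
  have d: "(y + 3 ^ Suc k * z) div 3 = y div 3 + 3^k * z" by simp
  have lt: "y div 3 < 3^k" using Suc.prems by simp
  have "wt3 (Suc k + n) (y + 3 ^ Suc k * z) = y mod 3 + wt3 (k+n) (y div 3 + 3^k * z)"
    using wt3_Suc[of "k+n"] m d by simp
  also have "\<dots> = y mod 3 + wt3 k (y div 3) + wt3 n z" using Suc.IH[OF lt] by simp
  also have "\<dots> = wt3 (Suc k) y + wt3 n z" by (simp add: wt3_Suc)
  finally show ?case .
qed

lemma wt3_le: "wt3 k x \<le> 2 * k"
proof -
  have "wt3 k x \<le> (\<Sum>j<k. 2)" unfolding wt3_def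
    by (rule sum_mono) auto
  then show ?thesis by simp
qed

lemma wt3_compl: "x < 3^k \<Longrightarrow> wt3 k (3^k - 1 - x) + wt3 k x = 2 * k"
proof (induction k arbitrary: x)
  case 0
  then show ?case by simp
next
  case (Suc k)
  define p where "p = (3::nat)^k"
  define d where "d = x div 3"
  define e where "e = x mod 3"
  have x: "x = 3*d + e" unfolding d_def e_def by simp
  have e3: "e < 3" unfolding e_def by simp
  have dp: "d < p" using Suc.prems unfolding d_def p_def by simp
  have eq: "3^(Suc k) - 1 - x = (2 - e) + 3*(p - 1 - d)"
    using x e3 dp unfolding p_def by simp
  have "wt3 (Suc k) (3^(Suc k) - 1 - x) = (2 - e) + wt3 k (p - 1 - d)"
  proof -
    have gm: "\<And>B A::nat. B < 3 \<Longrightarrow> (B + 3*A) mod 3 = B" by simp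
    have gd: "\<And>B A::nat. B < 3 \<Longrightarrow> (B + 3*A) div 3 = A" by simp
    have a: "((2 - e) + 3*(p - 1 - d)) mod 3 = 2 - e" by (rule gm) simp
    have b: "((2 - e) + 3*(p - 1 - d)) div 3 = p - 1 - d" by (rule gd) simp
    show ?thesis unfolding eq wt3_Suc a b ..
  qed
  moreover have "wt3 (Suc k) x = e + wt3 k d" unfolding wt3_Suc d_def e_def by simp
  moreover have "wt3 k (p - 1 - d) + wt3 k d = 2 * k" using Suc.IH dp unfolding p_def by simp
  ultimately show ?case using e3 by simp
qed

lemma wt3_1: "k \<ge> 1 \<Longrightarrow> wt3 k 1 = 1"
  by (cases k) (auto simp: wt3_Suc)

lemma pow3_mod4: "odd k \<Longrightarrow> (3::nat)^k mod 4 = 3"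
proof -
  assume "odd k"
  then obtain j where k: "k = 2*j+1" by (metis oddE)
  have "(9::nat)^j mod 4 = 1"
  proof -
    have "(9::nat)^j mod 4 = ((9 mod 4)^j) mod 4" by (rule power_mod[symmetric])
    then show ?thesis by simp
  qed
  moreover have "(3::nat)^k = 3 * 9^j" unfolding k by (simp add: power_add power_mult)
  moreover have "(3 * (9::nat)^j) mod 4 = (3 * (9^j mod 4)) mod 4" by (rule mod_mult_right_eq[symmetric])
  ultimately show ?thesis by simp
qed

theorem lemma43:
  fixes m :: nat
  assumes "m \<ge> 7" and "m mod 4 = 3"
  defines "N \<equiv> 3 ^ m - 1"
      and "v \<equiv> (3 ^ m - 1) div 2 + 3 ^ ((m - 1) div 2) - 1"
  shows "gcd v N = 1 \<and>
    (\<forall>i::nat. 4 * i \<le> 3 ^ ((m - 1) div 2) + 1 \<longrightarrow>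
       wt3 m ((v * (1 + 2 * i)) mod N) mod 4 = 3)"
proof -
  define k where "k = (m - 1) div 2"
  have mk: "m = 2*k+1" using assms(2) unfolding k_def by presburger
  have ok: "odd k" using assms(2) unfolding k_def by presburger
  have k3: "k \<ge> 3" using assms(1) mk by simp
  define q where "q = (3::nat)^k"
  have "q mod 4 = 3" unfolding q_def using pow3_mod4[OF ok] .
  then obtain r where qr: "q = 4*r+3" by (metis mod_div_decomp add.commute mult.commute)
  define c where "c = 2*r+1"
  define H where "H = c + q*(q+c)"
  have p3: "(3::nat)^m = 3*q^2" unfolding mk q_def by (simp add: power_add power_mult power2_eq_square mult.commute)
  have HH: "3*q^2 = 2*H + 1" unfolding H_def c_def qr by (simp add: algebra_simps power2_eq_square)
  have N: "N = 2*H" unfolding N_def p3 HH by simp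
  have v: "v = H + q - 1" unfolding v_def p3 HH q_def[symmetric] k_def[symmetric] by simp
  have v2: "v = H + (4*r+2)" using v qr by simp
  have gcd_part: "gcd v N = 1"
  proof -
    define d where "d = gcd v N"
    have d1: "d dvd v" and d2: "d dvd N" unfolding d_def by auto
    have "2*v = N + 2*(4*r+2)" using v2 N by simp
    hence "d dvd N + 2*(4*r+2)" using d1 by (metis dvd_mult)
    hence d3: "d dvd 2*(4*r+2)" using d2 dvd_add_right_iff by blast
    have "2*N = (3*(4*r+2)+6)*(2*(4*r+2)) + 4" using N unfolding H_def c_def qr
      by (simp add: algebra_simps)
    moreover have "d dvd (3*(4*r+2)+6)*(2*(4*r+2))" using d3 by (rule dvd_mult)
    moreover have "d dvd 2*N" using d2 by simp
    ultimately have d4: "d dvd 4" using dvd_add_right_iff by metis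
    have "odd v" using v2 unfolding H_def c_def qr by (simp add: algebra_simps)
    hence "odd d" using d1 by (metis dvd_trans even_two_times_div_two dvd_triv_left)
    moreover have "d \<le> 4" using d4 by (simp add: dvd_imp_le)
    ultimately have "d = 1 \<or> d = 3" using d4 by (cases d; auto; presburger)
    then show ?thesis using d4 unfolding d_def by auto
  qed
  have main: "wt3 m ((v * (1 + 2 * i)) mod N) = m" if hi: "4 * i \<le> q + 1" for i
  proof -
    have ir: "i \<le> r+1" using hi qr by simp
    define a where "a = 1 + 2*i"
    have va: "v * a = (H + (q-1)*a) + i*N" unfolding v a_def N using qr
      by (simp add: algebra_simps)
    have "(q-1)*a \<le> (4*r+2)*(2*r+3)" unfolding a_def using qr ir by (intro mult_le_mono) auto
    moreover have "(4*r+2)*(2*r+3) < H" unfolding H_def c_def qr by (simp add: algebra_simps)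
    ultimately have lt: "H + (q-1)*a < N" unfolding N by simp
    have modeq: "(v * a) mod N = H + (q-1)*a" unfolding va using lt by simp
    have "wt3 m (H + (q-1)*a) = m"
    proof (cases "i \<le> r")
      case True
      define x where "x = 2*r+2+2*i"
      define y where "y = 2*r - 2*i"
      have V: "H + (q-1)*a = y + 3^k*(x + 3^k*1)" unfolding q_def[symmetric] x_def y_def H_def c_def a_def qr
        using True by (simp add: algebra_simps)
      have yq: "y < 3^k" and xq: "x < 3^k" unfolding q_def[symmetric] x_def y_def qr using True by auto
      have yx: "y = 3^k - 1 - x" unfolding q_def[symmetric] x_def y_def qr using True by simp
      have "wt3 m (H + (q-1)*a) = wt3 k y + wt3 (k+1) (x + 3^k*1)"
        unfolding V mk by (metis wt3_split[OF yq] add_Suc_right add_Suc mult_2 add.assoc)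
      also have "wt3 (k+1) (x + 3^k*1) = wt3 k x + 1" using wt3_split[OF xq, of 1 1] by (simp add: wt3_def)
      also have "wt3 k y + (wt3 k x + 1) = 2*k+1" using wt3_compl[OF xq] yx by simp
      finally show ?thesis using mk by simp
    next
      case False
      hence ii: "i = r+1" using ir by simp
      have V: "H + (q-1)*a = (3^k - 1 - 1) + 3^k*(0 + 3^k*2)" unfolding q_def[symmetric] H_def c_def a_def qr ii
        by (simp add: algebra_simps)
      have yq: "3^k - 1 - 1 < (3::nat)^k" by simp
      have zq: "(0::nat) < 3^k" by simp
      have one: "(1::nat) < 3^k" 
      proof -
        have "(3::nat)^1 < 3^k" using k3 by (intro power_strict_increasing) auto
        then show ?thesis by simp
      qed
      have "wt3 m (H + (q-1)*a) = wt3 k (3^k - 1 - 1) + wt3 (k+1) (0 + 3^k*2)"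
        unfolding V mk by (metis wt3_split[OF yq] add_Suc_right add_Suc mult_2 add.assoc)
      also have "wt3 (k+1) (0 + 3^k*2) = 2" using wt3_split[OF zq, of 1 2] by (simp add: wt3_def)
      also have "wt3 k (3^k - 1 - 1) = 2*k - 1" using wt3_compl[OF one] wt3_1[of k] k3 by simp
      finally show ?thesis using mk k3 by simp
    qed
    then show ?thesis using modeq unfolding a_def by simp
  qed
  show ?thesis
  proof (intro conjI allI impI)
    show "gcd v N = 1" by (rule gcd_part)
  next
    fix i :: nat assume "4 * i \<le> 3 ^ ((m - 1) div 2) + 1"
    hence "4 * i \<le> q + 1" unfolding q_def k_def .
    then have "wt3 m ((v * (1 + 2 * i)) mod N) = m" by (rule main)
    then show "wt3 m ((v * (1 + 2 * i)) mod N) mod 4 = 3" using assms(2) by (simp only:)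
  qed
qed

end
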